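(* Let $T:V\to V$ be a right-linear closed operator with two-sided linear domain, and let $q(s)=\sum_{j=0}^mb_js^j\not\equiv0$ be a polynomial with real coefficients $b_j$. If $q$ has no zeros in $\sigma_S(T)$, then the operator $q[T]:=\sum_{j=0}^mb_jT^j$, with domain $\operatorname{dom}(T^m)$, is a bijection from $\operatorname{dom}(T^m)$ onto $V$.
   Context: $\mathbb{H}$ denotes the quaternions, $V$ a two-sided Banach space over $\mathbb{H}$, $\mathcal{I}$ the identity. For a right-linear closed operator $T$ on $V$ and $s=s_0+s_1e_1+s_2e_2+s_3e_3\in\mathbb{H}$ with $|s|^2=s_0^2+s_1^2+s_2^2+s_3^2$, let $Q_s(T):=T^2-2s_0T+|s|^2\mathcal{I}$ with domain $\operatorname{dom}(T^2)$. The $S$-resolvent set is $\rho_S(T)=\{s\in\mathbb{H}: Q_s(T):\operatorname{dom}(T^2)\to V\text{ is bijective}\}$ and the $S$-spectrum is $\sigma_S(T)=\mathbb{H}\setminus\rho_S(T)$. *)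

theory Defs
  imports "HOL-Analysis.Analysis" "HOL-Computational_Algebra.Polynomial"
begin

datatype quat = Quat (qre: real) (qi: real) (qj: real) (qk: real)

instantiation quat :: ring_1
begin
definition "0 = Quat 0 0 0 0"
definition "1 = Quat 1 0 0 0"
definition "a + b = Quat (qre a + qre b) (qi a + qi b) (qj a + qj b) (qk a + qk b)"
definition "- a = Quat (- qre a) (- qi a) (- qj a) (- qk a)"
definition "a - b = Quat (qre a - qre b) (qi a - qi b) (qj a - qj b) (qk a - qk b)"
definition "a * b = Quat
   (qre a * qre b - qi a * qi b - qj a * qj b - qk a * qk b)
   (qre a * qi b + qi a * qre b + qj a * qk b - qk a * qj b)
   (qre a * qj b - qi a * qk b + qj a * qre b + qk a * qi b)
   (qre a * qk b + qi a * qj b - qj a * qi b + qk a * qre b)"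
instance
  by standard (auto simp: zero_quat_def one_quat_def plus_quat_def uminus_quat_def
      minus_quat_def times_quat_def algebra_simps quat.expand)
end

definition quat_of_real :: "real \<Rightarrow> quat" where
  "quat_of_real r = Quat r 0 0 0"

definition qnormsq :: "quat \<Rightarrow> real" where
  "qnormsq s = (qre s)\<^sup>2 + (qi s)\<^sup>2 + (qj s)\<^sup>2 + (qk s)\<^sup>2"

definition qnorm :: "quat \<Rightarrow> real" where
  "qnorm s = sqrt (qnormsq s)"

definition qpoly_eval :: "real poly \<Rightarrow> quat \<Rightarrow> quat" where
  "qpoly_eval q s = (\<Sum>j\<le>degree q. quat_of_real (coeff q j) * s ^ j)"

definition two_sided_qbanach :: "(quat \<Rightarrow> 'v::banach \<Rightarrow> 'v) \<Rightarrow> ('v \<Rightarrow> quat \<Rightarrow> 'v) \<Rightarrow> bool" where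
  "two_sided_qbanach lm rm \<longleftrightarrow>
     (\<forall>a b u. lm (a + b) u = lm a u + lm b u) \<and>
     (\<forall>a u w. lm a (u + w) = lm a u + lm a w) \<and>
     (\<forall>a b u. lm (a * b) u = lm a (lm b u)) \<and>
     (\<forall>u. lm 1 u = u) \<and>
     (\<forall>a b u. rm u (a + b) = rm u a + rm u b) \<and>
     (\<forall>a u w. rm (u + w) a = rm u a + rm w a) \<and>
     (\<forall>a b u. rm u (a * b) = rm (rm u a) b) \<and>
     (\<forall>u. rm u 1 = u) \<and>
     (\<forall>a b u. rm (lm a u) b = lm a (rm u b)) \<and>
     (\<forall>r u. lm (quat_of_real r) u = r *\<^sub>R u \<and> rm u (quat_of_real r) = r *\<^sub>R u) \<and>
     (\<forall>a u. norm (lm a u) \<le> qnorm a * norm u \<and> norm (rm u a) \<le> qnorm a * norm u)"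

text \<open>An (unbounded) operator is a map T together with its domain D.\<close>

definition two_sided_linear_subspace ::
  "(quat \<Rightarrow> 'v::banach \<Rightarrow> 'v) \<Rightarrow> ('v \<Rightarrow> quat \<Rightarrow> 'v) \<Rightarrow> 'v set \<Rightarrow> bool" where
  "two_sided_linear_subspace lm rm D \<longleftrightarrow>
     0 \<in> D \<and> (\<forall>u\<in>D. \<forall>w\<in>D. u + w \<in> D) \<and>
     (\<forall>u\<in>D. \<forall>a. lm a u \<in> D \<and> rm u a \<in> D)"

definition right_linear_op ::
  "('v::banach \<Rightarrow> quat \<Rightarrow> 'v) \<Rightarrow> 'v set \<Rightarrow> ('v \<Rightarrow> 'v) \<Rightarrow> bool" where
  "right_linear_op rm D T \<longleftrightarrow>
     (\<forall>u\<in>D. \<forall>w\<in>D. T (u + w) = T u + T w) \<and>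
     (\<forall>u\<in>D. \<forall>a. T (rm u a) = rm (T u) a)"

definition closed_op :: "'v::banach set \<Rightarrow> ('v \<Rightarrow> 'v) \<Rightarrow> bool" where
  "closed_op D T \<longleftrightarrow> closed {(u, T u) | u. u \<in> D}"

fun op_pow_dom :: "'v set \<Rightarrow> ('v \<Rightarrow> 'v) \<Rightarrow> nat \<Rightarrow> 'v set" where
  "op_pow_dom D T 0 = UNIV"
| "op_pow_dom D T (Suc n) = {u \<in> D. T u \<in> op_pow_dom D T n}"

definition Q_op :: "('v::banach \<Rightarrow> 'v) \<Rightarrow> quat \<Rightarrow> 'v \<Rightarrow> 'v" where
  "Q_op T s u = T (T u) - (2 * qre s) *\<^sub>R T u + qnormsq s *\<^sub>R u"

definition S_resolvent_set :: "'v::banach set \<Rightarrow> ('v \<Rightarrow> 'v) \<Rightarrow> quat set" where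
  "S_resolvent_set D T = {s. bij_betw (Q_op T s) (op_pow_dom D T 2) UNIV}"

definition S_spectrum :: "'v::banach set \<Rightarrow> ('v \<Rightarrow> 'v) \<Rightarrow> quat set" where
  "S_spectrum D T = UNIV - S_resolvent_set D T"

text \<open>q[T] = sum_j b_j T^j (to be considered on dom(T^m), m = degree q).\<close>
definition poly_op :: "real poly \<Rightarrow> ('v::banach \<Rightarrow> 'v) \<Rightarrow> 'v \<Rightarrow> 'v" where
  "poly_op q T u = (\<Sum>j\<le>degree q. coeff q j *\<^sub>R (T ^^ j) u)"

end

theory Submission imports Defs "HOL-Computational_Algebra.Fundamental_Theorem_Algebra"
begin

lemma map_of_real_mult:
  "map_poly (of_real :: real \<Rightarrow> complex) (p * q) = map_poly of_real p * map_poly of_real q"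
  by (rule poly_eqI) (simp add: coeff_map_poly coeff_mult)

lemma map_of_real_add:
  "map_poly (of_real :: real \<Rightarrow> complex) (p + q) = map_poly of_real p + map_poly of_real q"
  by (rule poly_eqI) (simp add: coeff_map_poly)

lemma poly_map_real: "poly (map_poly complex_of_real p) (complex_of_real x) = of_real (poly p x)"
  by (induction p) (auto simp: map_poly_pCons)

lemma deg_map: "degree (map_poly complex_of_real p) = degree p"
  by (simp add: degree_map_poly)

locale opctx =
  fixes D :: "'v::banach set" and T :: "'v \<Rightarrow> 'v"
  assumes D0: "0 \<in> D" and Dadd: "u\<in>D \<Longrightarrow> w\<in>D \<Longrightarrow> u+w \<in> D"
    and Dscale: "u\<in>D \<Longrightarrow> c *\<^sub>R u \<in> D"
    and Tadd: "u\<in>D \<Longrightarrow> w\<in>D \<Longrightarrow> T (u+w) = T u + T w"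
    and Tscale: "u\<in>D \<Longrightarrow> T (c *\<^sub>R u) = c *\<^sub>R T u"
begin

lemma T0: "T 0 = 0"
  using Tadd[OF D0 D0] by simp

lemma Dsum: "finite I \<Longrightarrow> (\<forall>i\<in>I. x i \<in> D) \<Longrightarrow> (\<Sum>i\<in>I. c i *\<^sub>R x i) \<in> D"
  by (induction I rule: finite_induct) (auto simp: D0 Dadd Dscale)

lemma Tsum: "finite I \<Longrightarrow> (\<forall>i\<in>I. x i \<in> D) \<Longrightarrow> T (\<Sum>i\<in>I. c i *\<^sub>R x i) = (\<Sum>i\<in>I. c i *\<^sub>R T (x i))"
proof (induction I rule: finite_induct)
  case empty then show ?case by (simp add: T0)
next
  case (insert a F)
  then show ?case by (simp add: Tadd Dscale Dsum Tscale)
qed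

lemma Dminus: "u\<in>D \<Longrightarrow> w\<in>D \<Longrightarrow> u - w \<in> D"
  using Dadd[of u "(-1) *\<^sub>R w"] Dscale[of w "-1"] by simp

lemma Tminus: "u\<in>D \<Longrightarrow> w\<in>D \<Longrightarrow> T (u - w) = T u - T w"
  using Tadd[of u "(-1) *\<^sub>R w"] Dscale[of w "-1"] Tscale[of w "-1"] by simp

abbreviation dom where "dom n \<equiv> op_pow_dom D T n"

lemma dom_char: "dom n = {u. \<forall>j<n. (T^^j) u \<in> D}"
proof (induction n)
  case 0 then show ?case by simp
next
  case (Suc n)
  show ?case
  proof (intro set_eqI iffI)
    fix u assume "u \<in> dom (Suc n)"
    then show "u \<in> {u. \<forall>j<Suc n. (T^^j) u \<in> D}"
      using Suc by (auto simp: less_Suc_eq_0_disj funpow_swap1)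
  next
    fix u assume "u \<in> {u. \<forall>j<Suc n. (T^^j) u \<in> D}"
    then have "\<forall>j<Suc n. (T^^j) u \<in> D" by simp
    then have "u \<in> D" "\<forall>j<n. (T^^j) (T u) \<in> D"
       apply (metis zero_less_Suc funpow_0)
    proof (intro allI impI)
      fix j assume "j < n"
      then have "(T^^Suc j) u \<in> D" using \<open>\<forall>j<Suc n. (T^^j) u \<in> D\<close> Suc_mono by blast
      then show "(T^^j) (T u) \<in> D" by (simp only: funpow_Suc_right comp_apply)
    qed
    then show "u \<in> dom (Suc n)" using Suc by simp
  qed
qed

lemma dom_mono: "m \<le> n \<Longrightarrow> dom n \<subseteq> dom m"
  by (auto simp: dom_char)

lemma domD: "u \<in> dom n \<Longrightarrow> j < n \<Longrightarrow> (T^^j) u \<in> D"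
  by (auto simp: dom_char)

definition popN :: "nat \<Rightarrow> real poly \<Rightarrow> 'v \<Rightarrow> 'v" where
  "popN N p u = (\<Sum>k\<le>N. coeff p k *\<^sub>R (T^^k) u)"

lemma poly_op_N: "degree p \<le> N \<Longrightarrow> poly_op p T u = popN N p u"
  unfolding poly_op_def popN_def
  by (rule sum.mono_neutral_left) (auto simp: coeff_eq_0)

lemma popN_add: "popN N (p + q) u = popN N p u + popN N q u"
  by (simp add: popN_def scaleR_add_left sum.distrib)

lemma popN_smult: "popN N (smult a p) u = a *\<^sub>R popN N p u"
  by (simp add: popN_def scaleR_sum_right)

lemma popN_const: "popN N [:a:] u = a *\<^sub>R u"
proof -
  have "popN N [:a:] u = (\<Sum>k\<le>N. if k = 0 then a *\<^sub>R u else 0)"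
    unfolding popN_def by (intro sum.cong) (auto simp: coeff_pCons split: nat.split)
  then show ?thesis by simp
qed

lemma popN_pCons0:
  assumes u: "u \<in> dom (Suc N)" shows "popN (Suc N) (pCons 0 p) u = T (popN N p u)"
proof -
  have "popN (Suc N) (pCons 0 p) u = coeff (pCons 0 p) 0 *\<^sub>R (T^^0) u + (\<Sum>i\<le>N. coeff (pCons 0 p) (Suc i) *\<^sub>R (T^^Suc i) u)"
    unfolding popN_def by (rule sum.atMost_Suc_shift)
  also have "\<dots> = (\<Sum>i\<le>N. coeff p i *\<^sub>R T ((T^^i) u))" by simp
  also have "\<dots> = T (popN N p u)" unfolding popN_def
    using domD[OF u] by (subst Tsum) auto
  finally show ?thesis .
qed

lemma poly_op_zero[simp]: "poly_op 0 T u = 0"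
  by (simp add: poly_op_def)

lemma L1: "u \<in> dom n \<Longrightarrow> j + degree r \<le> n \<Longrightarrow>
   (T^^j) (poly_op r T u) = (\<Sum>i\<le>degree r. coeff r i *\<^sub>R (T^^(i+j)) u)"
proof (induction j)
  case 0 then show ?case by (simp add: poly_op_def)
next
  case (Suc j)
  have "(T^^Suc j) (poly_op r T u) = T (\<Sum>i\<le>degree r. coeff r i *\<^sub>R (T^^(i+j)) u)"
    using Suc by simp
  also have "\<dots> = (\<Sum>i\<le>degree r. coeff r i *\<^sub>R T ((T^^(i+j)) u))"
    using Suc.prems by (intro Tsum) (auto intro!: domD)
  finally show ?case by simp
qed

lemma map_dom: "u \<in> dom (k + degree r) \<Longrightarrow> poly_op r T u \<in> dom k"
proof -
  assume u: "u \<in> dom (k + degree r)"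
  have "(T^^j) (poly_op r T u) \<in> D" if "j < k" for j
  proof -
    have "(T^^j) (poly_op r T u) = (\<Sum>i\<le>degree r. coeff r i *\<^sub>R (T^^(i+j)) u)"
      using u that by (intro L1) auto
    also have "\<dots> \<in> D" using u that by (intro Dsum) (auto intro!: domD)
    finally show ?thesis .
  qed
  then show ?thesis by (simp add: dom_char)
qed

lemma comm: "u \<in> dom (Suc (degree r)) \<Longrightarrow> T (poly_op r T u) = poly_op r T (T u)"
  using L1[of u "Suc (degree r)" 1 r] by (simp add: poly_op_def funpow_swap1 del: op_pow_dom.simps)

lemma dom_back: "r \<noteq> 0 \<Longrightarrow> u \<in> dom (degree r) \<Longrightarrow> poly_op r T u \<in> dom k \<Longrightarrow> u \<in> dom (k + degree r)"
proof (induction k arbitrary: u)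
  case 0 then show ?case by simp
next
  case (Suc k)
  define d where "d = degree r"
  have pd: "poly_op r T u \<in> D" and pk: "T (poly_op r T u) \<in> dom k" using Suc.prems by auto
  have "poly_op r T u = (\<Sum>i<d. coeff r i *\<^sub>R (T^^i) u) + coeff r d *\<^sub>R (T^^d) u"
    unfolding poly_op_def d_def by (simp add: lessThan_Suc_atMost[symmetric])
  then have "coeff r d *\<^sub>R (T^^d) u = poly_op r T u - (\<Sum>i<d. coeff r i *\<^sub>R (T^^i) u)"
    by (simp add: algebra_simps)
  also have "\<dots> \<in> D" using Suc.prems pd unfolding d_def
    by (intro Dminus Dsum) (auto intro!: domD)
  finally have "(1 / coeff r d) *\<^sub>R (coeff r d *\<^sub>R (T^^d) u) \<in> D" by (rule Dscale)
  moreover have "coeff r d \<noteq> 0" using Suc.prems d_def by simp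
  ultimately have "(T^^d) u \<in> D" by simp
  moreover have "\<forall>j<d. (T^^j) u \<in> D" using Suc.prems(2) unfolding d_def by (simp add: domD)
  ultimately have u1': "\<forall>j<Suc d. (T^^j) u \<in> D" by (auto simp: less_Suc_eq)
  then have u1: "u \<in> dom (Suc d)" by (simp only: dom_char) simp
  then have "T (poly_op r T u) = poly_op r T (T u)" unfolding d_def by (rule comm)
  moreover have "T u \<in> dom d" using u1' by (simp only: dom_char) (auto simp: funpow_swap1[symmetric])
  ultimately have "T u \<in> dom (k + d)" using Suc.IH[of "T u"] Suc.prems pk d_def by simp
  moreover have "u \<in> D" using u1' by (metis funpow_0 zero_less_Suc)
  ultimately show ?case unfolding d_def by simp
qed

lemma lift:
  assumes "bij_betw (poly_op r T) (dom (degree r)) UNIV" "r \<noteq> 0"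
  shows "bij_betw (poly_op r T) (dom (k + degree r)) (dom k)"
  unfolding bij_betw_def
proof
  show "inj_on (poly_op r T) (dom (k + degree r))"
    using assms(1) dom_mono[of "degree r" "k + degree r"] by (auto simp: bij_betw_def intro: inj_on_subset)
  show "poly_op r T ` dom (k + degree r) = dom k"
  proof
    show "poly_op r T ` dom (k + degree r) \<subseteq> dom k" using map_dom by auto
    show "dom k \<subseteq> poly_op r T ` dom (k + degree r)"
    proof
      fix v assume v: "v \<in> dom k"
      obtain u where "u \<in> dom (degree r)" "v = poly_op r T u"
        using assms(1) unfolding bij_betw_def by (metis (no_types, lifting) UNIV_I imageE)
      then show "v \<in> poly_op r T ` dom (k + degree r)" using dom_back[OF assms(2)] v by auto
    qed
  qed
qed


lemma prod_op:
  assumes "r \<noteq> 0"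
  shows "u \<in> dom (degree p + degree r) \<Longrightarrow> poly_op (p * r) T u = poly_op p T (poly_op r T u)"
proof (induction p arbitrary: u rule: pCons_induct)
  case 0
  have "(T^^k) 0 = 0" for k by (induction k) (simp_all add: T0)
  then show ?case by (simp add: poly_op_def)
next
  case (pCons a p')
  define v where "v = poly_op r T u"
  show ?case
  proof (cases "p' = 0")
    case True
    have "poly_op (pCons a p' * r) T u = popN (degree r) (smult a r) u"
      using True poly_op_N[of "smult a r" "degree r"] by simp
    also have "\<dots> = a *\<^sub>R poly_op r T u" by (simp add: popN_smult poly_op_N[of r "degree r"])
    also have "\<dots> = poly_op (pCons a p') T (poly_op r T u)"
      using True poly_op_N[of "[:a:]" 0] by (simp add: popN_const)
    finally show ?thesis .
  next
    case False
    define N where "N = degree p' + degree r"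
    have dp: "degree (pCons a p') = Suc (degree p')" using False by simp
    have u: "u \<in> dom (Suc N)" using pCons.prems dp N_def by simp
    have "poly_op (pCons a p' * r) T u = popN (Suc N) (smult a r + pCons 0 (p' * r)) u"
      using poly_op_N[of "pCons a p' * r" "Suc N"] dp N_def degree_mult_le[of "pCons a p'" r] by simp
    also have "\<dots> = a *\<^sub>R popN (Suc N) r u + T (popN N (p' * r) u)"
      by (simp add: popN_add popN_smult popN_pCons0[OF u])
    also have "\<dots> = a *\<^sub>R v + T (poly_op (p' * r) T u)"
      using degree_mult_le[of p' r] N_def v_def poly_op_N[of r "Suc N"] poly_op_N[of "p' * r" N] by simp
    also have "poly_op (p' * r) T u = poly_op p' T v"
      unfolding v_def using dom_mono[of N "Suc N"] u N_def by (intro pCons.IH) auto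
    also have "a *\<^sub>R v + T (poly_op p' T v) = popN (Suc (degree p')) (pCons a p') v"
    proof -
      have "v \<in> dom (Suc (degree p'))" unfolding v_def
        by (rule map_dom) (use u N_def in simp)
      have e: "pCons a p' = [:a:] + pCons 0 p'" by simp
      have "popN (Suc (degree p')) (pCons a p') v = popN (Suc (degree p')) [:a:] v + popN (Suc (degree p')) (pCons 0 p') v"
        by (subst e, rule popN_add)
      also have "\<dots> = a *\<^sub>R v + T (poly_op p' T v)"
        using \<open>v \<in> dom (Suc (degree p'))\<close> by (simp only: popN_const popN_pCons0 poly_op_N[of p' "degree p'", OF order_refl])
      finally show ?thesis by simp
    qed
    also have "\<dots> = poly_op (pCons a p') T v"
      using dp poly_op_N[of "pCons a p'" "Suc (degree p')"] by simp
    finally show ?thesis unfolding v_def .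
  qed
qed

lemma poly_op_lin: "poly_op [:c, 1:] T u = c *\<^sub>R u + T u"
  by (simp add: poly_op_def)

lemma poly_op_quad: "poly_op [:n, b, 1:] T u = n *\<^sub>R u + b *\<^sub>R T u + T (T u)"
  by (simp add: poly_op_def numeral_2_eq_2)

lemma lin_bij:
  assumes Q: "bij_betw (\<lambda>u. T (T u) - (2*r) *\<^sub>R T u + (r^2) *\<^sub>R u) (dom 2) UNIV"
  shows "bij_betw (poly_op [:-r,1:] T) (dom (degree [:-r,1:])) UNIV"
proof -
  define A where "A u = (-r) *\<^sub>R u + T u" for u
  have d1: "dom (degree [:-r,1:]) = D" by simp
  have d2: "dom 2 = {u\<in>D. T u \<in> D}" by (simp add: numeral_2_eq_2)
  have QA: "T (T u) - (2*r) *\<^sub>R T u + (r^2) *\<^sub>R u = A (A u)" if "u \<in> D" "T u \<in> D" for u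
    using that unfolding A_def
    by (simp add: Tadd Dscale Tscale Tminus algebra_simps power2_eq_square scaleR_2 flip: scaleR_scaleR)
  have Alin: "A (u - w) = A u - A w" if "u \<in> D" "w \<in> D" for u w
    using that unfolding A_def by (simp add: Tminus algebra_simps)
  have "bij_betw A D UNIV"
    unfolding bij_betw_def
  proof
    show "inj_on A D"
    proof (rule inj_onI)
      fix u w assume u: "u \<in> D" and w: "w \<in> D" and e: "A u = A w"
      define x where "x = u - w"
      have x: "x \<in> D" using u w x_def Dminus by simp
      have Ax: "A x = 0" using Alin[OF u w] e x_def by simp
      then have Tx: "T x = r *\<^sub>R x" unfolding A_def by (simp add: algebra_simps)
      then have x2: "x \<in> dom 2" using x d2 Dscale by simp
      have "T (T x) - (2*r) *\<^sub>R T x + (r^2) *\<^sub>R x = A (A x)" using x Tx Dscale QA[of x] by simp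
      also have "\<dots> = 0" using Ax T0 unfolding A_def by simp
      finally have "T (T x) - (2*r) *\<^sub>R T x + (r^2) *\<^sub>R x = T (T 0) - (2*r) *\<^sub>R T 0 + (r^2) *\<^sub>R (0::'v)"
        using T0 by simp
      moreover have "(0::'v) \<in> dom 2" using d2 D0 T0 by simp
      ultimately have "x = 0" using Q x2 unfolding bij_betw_def inj_on_def by blast
      then show "u = w" using x_def by simp
    qed
    show "A ` D = UNIV"
    proof (intro set_eqI iffI)
      fix v :: 'v
      obtain u where u: "u \<in> dom 2" "v = T (T u) - (2*r) *\<^sub>R T u + (r^2) *\<^sub>R u"
        using Q unfolding bij_betw_def by (metis (no_types, lifting) UNIV_I imageE)
      then have "v = A (A u)" "A u \<in> D" using QA[of u] d2 unfolding A_def by (auto simp: Dadd Dscale Dminus)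
      then show "v \<in> A ` D" by blast
    qed simp
  qed
  moreover have "poly_op [:-r,1:] T u = A u" for u by (simp add: poly_op_lin A_def)
  ultimately show ?thesis using d1 by (metis (no_types, lifting) bij_betw_cong)
qed

lemma quad_bij:
  assumes Q: "bij_betw (\<lambda>u. T (T u) - (2*a) *\<^sub>R T u + n *\<^sub>R u) (dom 2) UNIV"
  shows "bij_betw (poly_op [:n, -2*a, 1:] T) (dom (degree [:n, -2*a, 1:])) UNIV"
proof -
  have "poly_op [:n, -2*a, 1:] T u = T (T u) - (2*a) *\<^sub>R T u + n *\<^sub>R u" for u
    by (simp add: poly_op_quad algebra_simps)
  moreover have "degree [:n, -2*a, 1:] = 2" by simp
  ultimately show ?thesis using Q by (metis (no_types, lifting) bij_betw_cong)
qed


theorem main: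
  assumes "q \<noteq> 0"
    "\<forall>z. poly (map_poly complex_of_real q) z = 0 \<longrightarrow>
       bij_betw (\<lambda>u. T (T u) - (2 * Re z) *\<^sub>R T u + (cmod z)^2 *\<^sub>R u) (dom 2) UNIV"
  shows "bij_betw (poly_op q T) (dom (degree q)) UNIV"
  using assms
proof (induction "degree q" arbitrary: q rule: less_induct)
  case less
  show ?case
  proof (cases "degree q = 0")
    case True
    define c where "c = coeff q 0"
    have q: "q = [:c:]"
      by (rule poly_eqI) (use True in \<open>auto simp: c_def coeff_pCons coeff_eq_0 split: nat.split\<close>)
    have c: "c \<noteq> 0" using q less.prems by auto
    have e: "poly_op q T u = c *\<^sub>R u" for u using True by (simp add: poly_op_def c_def)
    have "bij_betw (\<lambda>u. c *\<^sub>R u) UNIV (UNIV :: 'v set)"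
      unfolding bij_betw_def
    proof
      show "inj_on (\<lambda>u::'v. c *\<^sub>R u) UNIV" using c by (auto simp: inj_on_def)
      show "range (\<lambda>u::'v. c *\<^sub>R u) = UNIV"
      proof (intro set_eqI iffI)
        fix v :: 'v
        have "v = c *\<^sub>R (inverse c *\<^sub>R v)" using c by simp
        then show "v \<in> range (\<lambda>u::'v. c *\<^sub>R u)" by blast
      qed simp
    qed
    moreover have "poly_op q T = (\<lambda>u. c *\<^sub>R u)" using e by (rule ext)
    ultimately show ?thesis using True by simp
  next
    case False
    then obtain z :: complex where z: "poly (map_poly complex_of_real q) z = 0"
      using fundamental_theorem_of_algebra constant_degree deg_map by metis
    have Qz: "bij_betw (\<lambda>u. T (T u) - (2 * Re z) *\<^sub>R T u + (cmod z)^2 *\<^sub>R u) (dom 2) UNIV"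
      using less.prems(2) z by blast
    obtain p where pdvd: "p dvd q" and pdeg: "degree p \<ge> 1"
      and pbij: "bij_betw (poly_op p T) (dom (degree p)) UNIV"
    proof (cases "Im z = 0")
      case True
      have zr: "z = of_real (Re z)" using True by (simp add: complex_eq_iff)
      have "poly q (Re z) = 0" using z zr poly_map_real[of q "Re z"] by simp
      then have "[:-Re z, 1:] dvd q" by (simp add: poly_eq_0_iff_dvd)
      moreover have "(cmod z)^2 = (Re z)^2" using zr by (metis norm_of_real power2_abs)
      ultimately show ?thesis using that[of "[:-Re z, 1:]"] lin_bij[of "Re z"] Qz by simp
    next
      case False
      define p where "p = [:(cmod z)^2, -2 * Re z, 1:]"
      have p0: "p \<noteq> 0" and dp: "degree p = 2" by (simp_all add: p_def)
      have pz: "poly (map_poly complex_of_real p) z = 0"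
        by (simp add: p_def map_poly_pCons complex_eq_iff power2_eq_square cmod_power2[unfolded power2_eq_square] algebra_simps)
      define rr where "rr = q mod p"
      have drr: "degree rr \<le> 1" using degree_mod_less[OF p0, of q] dp rr_def by auto
      have "q = q div p * p + rr" by (simp add: rr_def)
      then have "poly (map_poly complex_of_real q) z
          = poly (map_poly complex_of_real (q div p)) z * poly (map_poly complex_of_real p) z
            + poly (map_poly complex_of_real rr) z"
        by (metis map_of_real_mult map_of_real_add poly_add poly_mult)
      then have rz: "poly (map_poly complex_of_real rr) z = 0" using z pz by simp
      have rr: "rr = [:coeff rr 0, coeff rr 1:]"
        by (rule poly_eqI) (use drr in \<open>auto simp: coeff_pCons coeff_eq_0 split: nat.split\<close>)
      have "poly (map_poly complex_of_real rr) z = of_real (coeff rr 0) + z * of_real (coeff rr 1)"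
        by (subst rr) (simp add: map_poly_pCons)
      then have "of_real (coeff rr 0) + z * of_real (coeff rr 1) = 0" using rz by simp
      then have "coeff rr 0 + Re z * coeff rr 1 = 0" "Im z * coeff rr 1 = 0"
        by (simp_all add: complex_eq_iff)
      then have "coeff rr 1 = 0" "coeff rr 0 = 0" using False by simp_all
      then have "rr = 0" using rr by simp
      then have "p dvd q" unfolding rr_def by (metis dvd_eq_mod_eq_0)
      moreover have "bij_betw (poly_op p T) (dom (degree p)) UNIV"
        unfolding p_def using quad_bij[of "Re z" "(cmod z)^2"] Qz by simp
      ultimately show ?thesis using that dp by simp
    qed
    then obtain q' where qq: "q = p * q'" by (auto elim: dvdE)
    have p0: "p \<noteq> 0" and q0: "q' \<noteq> 0" using less.prems qq by auto
    have dq: "degree q = degree p + degree q'" using qq p0 q0 by (simp add: degree_mult_eq)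
    have hyp': "\<forall>w. poly (map_poly complex_of_real q') w = 0 \<longrightarrow>
       bij_betw (\<lambda>u. T (T u) - (2 * Re w) *\<^sub>R T u + (cmod w)^2 *\<^sub>R u) (dom 2) UNIV"
      using less.prems(2) qq by (simp add: map_of_real_mult)
    have b': "bij_betw (poly_op q' T) (dom (degree q')) UNIV"
      using less.hyps[of q'] dq pdeg q0 hyp' by simp
    have "bij_betw (poly_op q' T) (dom (degree p + degree q')) (dom (degree p))"
      by (rule lift[OF b' q0])
    then have "bij_betw (poly_op p T \<circ> poly_op q' T) (dom (degree q)) UNIV"
      using pbij dq by (simp add: bij_betw_trans)
    moreover have "poly_op q T u = (poly_op p T \<circ> poly_op q' T) u" if "u \<in> dom (degree q)" for u
      using prod_op[OF q0, of u p] that dq qq by simp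
    ultimately show ?thesis by (metis (no_types, lifting) bij_betw_cong)
  qed
qed

end

definition c2q :: "complex \<Rightarrow> quat" where "c2q z = Quat (Re z) (Im z) 0 0"

lemma c2q_mult: "c2q (x * y) = c2q x * c2q y"
  by (simp add: c2q_def times_quat_def)
lemma c2q_add: "c2q (x + y) = c2q x + c2q y"
  by (simp add: c2q_def plus_quat_def)
lemma c2q_0: "c2q 0 = 0"
  by (simp add: c2q_def zero_quat_def)
lemma c2q_1: "c2q 1 = 1"
  by (simp add: c2q_def one_quat_def)
lemma c2q_pow: "c2q (x ^ n) = c2q x ^ n"
  by (induction n) (simp_all add: c2q_1 c2q_mult)
lemma c2q_sum: "c2q (sum f A) = (\<Sum>a\<in>A. c2q (f a))"
  by (induction A rule: infinite_finite_induct) (simp_all add: c2q_0 c2q_add)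
lemma c2q_of_real: "c2q (of_real r) = quat_of_real r"
  by (simp add: c2q_def quat_of_real_def)
lemma c2q_eq0: "c2q z = 0 \<Longrightarrow> z = 0"
  by (simp add: c2q_def zero_quat_def complex_eq_iff)

lemma qeval: "qpoly_eval q (c2q z) = c2q (poly (map_poly complex_of_real q) z)"
  unfolding qpoly_eval_def poly_altdef deg_map
  by (simp add: c2q_sum c2q_mult c2q_pow c2q_of_real coeff_map_poly)

theorem lemma3p11:
  fixes lm :: "quat \<Rightarrow> 'v::banach \<Rightarrow> 'v" and rm :: "'v \<Rightarrow> quat \<Rightarrow> 'v"
    and D :: "'v set" and T :: "'v \<Rightarrow> 'v" and q :: "real poly"
  assumes "two_sided_qbanach lm rm"
    and "two_sided_linear_subspace lm rm D"
    and "right_linear_op rm D T"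
    and "closed_op D T"
    and "q \<noteq> 0"
    and "\<forall>s\<in>S_spectrum D T. qpoly_eval q s \<noteq> 0"
  shows "bij_betw (poly_op q T) (op_pow_dom D T (degree q)) UNIV"
proof -
  have rmr: "rm u (quat_of_real c) = c *\<^sub>R u" for u c
    using assms(1) unfolding two_sided_qbanach_def by blast
  have ctx: "opctx D T"
  proof
    show "0 \<in> D" using assms(2) unfolding two_sided_linear_subspace_def by blast
    show "u \<in> D \<Longrightarrow> w \<in> D \<Longrightarrow> u + w \<in> D" for u w
      using assms(2) unfolding two_sided_linear_subspace_def by blast
    show "u \<in> D \<Longrightarrow> c *\<^sub>R u \<in> D" for u c
      using assms(2) rmr[of u c] unfolding two_sided_linear_subspace_def by metis
    show "u \<in> D \<Longrightarrow> w \<in> D \<Longrightarrow> T (u + w) = T u + T w" for u w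
      using assms(3) unfolding right_linear_op_def by blast
    show "u \<in> D \<Longrightarrow> T (c *\<^sub>R u) = c *\<^sub>R T u" for u c
      using assms(3) rmr[of u c] rmr[of "T u" c] unfolding right_linear_op_def by metis
  qed
  have hyp: "\<forall>z. poly (map_poly complex_of_real q) z = 0 \<longrightarrow>
       bij_betw (\<lambda>u. T (T u) - (2 * Re z) *\<^sub>R T u + (cmod z)^2 *\<^sub>R u) (op_pow_dom D T 2) UNIV"
  proof (intro allI impI)
    fix z assume z: "poly (map_poly complex_of_real q) z = 0"
    have "qpoly_eval q (c2q z) = 0" using z by (simp add: qeval c2q_0)
    then have "c2q z \<in> S_resolvent_set D T" using assms(6) unfolding S_spectrum_def by blast
    then have "bij_betw (Q_op T (c2q z)) (op_pow_dom D T 2) UNIV" by (simp add: S_resolvent_set_def)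
    moreover have "Q_op T (c2q z) = (\<lambda>u. T (T u) - (2 * Re z) *\<^sub>R T u + (cmod z)^2 *\<^sub>R u)"
      by (rule ext) (simp add: Q_op_def c2q_def qnormsq_def cmod_power2)
    ultimately show "bij_betw (\<lambda>u. T (T u) - (2 * Re z) *\<^sub>R T u + (cmod z)^2 *\<^sub>R u) (op_pow_dom D T 2) UNIV"
      by simp
  qed
  show ?thesis using opctx.main[OF ctx assms(5) hyp] .
qed

end
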